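(* Let $\mathbf{k}$ be a field of characteristic zero, $n\ge3$, and let $S=(a_1,\dots,a_n)$, $S'=(a'_1,\dots,a'_n)$ have positive integer entries. Assume $i\in\{1,\dots,n\}$ is such that $S\le^iS'$, and set $k=a'_i/a_i\in\mathbb{N}\setminus\{0\}$. Then $B_S\cong B_{S'}^{(k)}$. Consequently $\mathrm{Proj}\,B_S\cong\mathrm{Proj}\,B_{S'}$.
   Context: $B_T=\mathbf{k}[X_1,\dots,X_n]/\langle X_1^{t_1}+\cdots+X_n^{t_n}\rangle$ for $T=(t_1,\dots,t_n)$, with its standard $\mathbb{N}$-grading in which the image of $X_j$ is homogeneous of degree $\mathrm{lcm}(T)/t_j$. For an $\mathbb{N}$-graded ring $R=\bigoplus_{m\ge0}R_m$ and $k>0$, $R^{(k)}=\bigoplus_{m\ge0}R_{mk}$. $S_i$ denotes $S$ with the $i$-th entry removed, $g_i(S)=\gcd(a_i,\mathrm{lcm}(S_i))$, and $S\le^iS'$ means $S_i=S'_i$ and $g_i(S')\mid a_i\mid a'_i$. *)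

theory Defs
  imports "HOL-Algebra.Algebra" "HOL-Library.Poly_Mapping"
begin

text \<open>Variables are indexed from 0, so X_j of the paper is variable j-1 here.\<close>

type_synonym 'a mpoly = "(nat \<Rightarrow>\<^sub>0 nat) \<Rightarrow>\<^sub>0 'a"

definition Xpow :: "nat \<Rightarrow> nat \<Rightarrow> 'a::field mpoly" where
  "Xpow j e = Poly_Mapping.single (Poly_Mapping.single j e) 1"

definition const_poly :: "'a::field \<Rightarrow> 'a mpoly" where
  "const_poly c = Poly_Mapping.single 0 c"

definition pring :: "nat \<Rightarrow> ('a::field mpoly) ring" where
  "pring n = \<lparr> carrier = {p. \<forall>m \<in> Poly_Mapping.keys p. Poly_Mapping.keys m \<subseteq> {..<n}},
               monoid.mult = (*), monoid.one = 1, ring.zero = 0, ring.add = (+) \<rparr>"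

definition fermat_poly :: "nat list \<Rightarrow> 'a::field mpoly" where
  "fermat_poly T = (\<Sum>j<length T. Xpow j (T ! j))"

definition fermat_ideal :: "nat list \<Rightarrow> 'a::field mpoly set" where
  "fermat_ideal T = genideal (pring (length T)) {fermat_poly T}"

definition B_ring :: "nat list \<Rightarrow> ('a::field mpoly set) ring" where
  "B_ring T = pring (length T) Quot fermat_ideal T"

definition wdeg :: "nat list \<Rightarrow> (nat \<Rightarrow>\<^sub>0 nat) \<Rightarrow> nat" where
  "wdeg T m = (\<Sum>j<length T. Poly_Mapping.lookup m j * (Lcm (set T) div (T ! j)))"

definition homogeneous :: "nat list \<Rightarrow> nat \<Rightarrow> 'a::field mpoly \<Rightarrow> bool" where
  "homogeneous T d p \<longleftrightarrow> (\<forall>m \<in> Poly_Mapping.keys p. wdeg T m = d)"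

text \<open>The homogeneous component (B_T)_d: classes of homogeneous polynomials of degree d
  (the defining ideal is homogeneous).\<close>
definition B_part :: "nat list \<Rightarrow> nat \<Rightarrow> 'a::field mpoly set set" where
  "B_part T d = {fermat_ideal T +>\<^bsub>pring (length T)\<^esub> p | p.
                   p \<in> carrier (pring (length T)) \<and> homogeneous T d p}"

text \<open>Veronese subring B_T^{(k)} = direct sum of the (B_T)_{mk}: classes of polynomials
  all of whose monomials have degree divisible by k.\<close>
definition veronese :: "nat list \<Rightarrow> nat \<Rightarrow> ('a::field mpoly set) ring" where
  "veronese T k = (B_ring T)\<lparr> carrier :=
     {fermat_ideal T +>\<^bsub>pring (length T)\<^esub> p | p.
        p \<in> carrier (pring (length T)) \<and> (\<forall>m \<in> Poly_Mapping.keys p. k dvd wdeg T m)} \<rparr>"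

definition graded_iso_veronese :: "'a::field itself \<Rightarrow> nat list \<Rightarrow> nat list \<Rightarrow> nat \<Rightarrow> bool" where
  "graded_iso_veronese _ S S' k \<longleftrightarrow>
     (\<exists>\<phi>. \<phi> \<in> ring_iso (B_ring S :: ('a mpoly set) ring) (veronese S' k) \<and>
          (\<forall>c::'a. \<phi> (fermat_ideal S +>\<^bsub>pring (length S)\<^esub> const_poly c)
                  = fermat_ideal S' +>\<^bsub>pring (length S')\<^esub> const_poly c) \<and>
          (\<forall>d. \<phi> ` (B_part S d :: 'a mpoly set set) = B_part S' (d * k)))"

text \<open>S_i: S with the i-th entry (0-based) removed; g_i(S) = gcd(a_i, lcm(S_i)).\<close>
definition remove_nth :: "nat \<Rightarrow> nat list \<Rightarrow> nat list" where
  "remove_nth i S = take i S @ drop (Suc i) S"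

definition g_idx :: "nat \<Rightarrow> nat list \<Rightarrow> nat" where
  "g_idx i S = gcd (S ! i) (Lcm (set (remove_nth i S)))"

definition le_idx :: "nat list \<Rightarrow> nat \<Rightarrow> nat list \<Rightarrow> bool" where
  "le_idx S i S' \<longleftrightarrow> remove_nth i S = remove_nth i S' \<and>
                      g_idx i S' dvd S ! i \<and> S ! i dvd S' ! i"

end

theory Submission
  imports Defs
begin


definition mu :: "nat \<Rightarrow> nat \<Rightarrow> (nat \<Rightarrow>\<^sub>0 nat) \<Rightarrow> (nat \<Rightarrow>\<^sub>0 nat)" where
  "mu i k m = m + Poly_Mapping.single i ((k - 1) * Poly_Mapping.lookup m i)"
definition nu :: "nat \<Rightarrow> nat \<Rightarrow> (nat \<Rightarrow>\<^sub>0 nat) \<Rightarrow> (nat \<Rightarrow>\<^sub>0 nat)" where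
  "nu i k x = x - Poly_Mapping.single i (Poly_Mapping.lookup x i - Poly_Mapping.lookup x i div k)"
definition Dk :: "nat \<Rightarrow> nat \<Rightarrow> (nat \<Rightarrow>\<^sub>0 nat) \<Rightarrow> bool" where
  "Dk i k x = (k dvd Poly_Mapping.lookup x i)"

lemma lookup_mu: "0 < k \<Longrightarrow> Poly_Mapping.lookup (mu i k m) j = (if j = i then k * Poly_Mapping.lookup m j else Poly_Mapping.lookup m j)"
  unfolding mu_def by (auto simp: lookup_add lookup_single when_def algebra_simps)

lemma lookup_nu: "Poly_Mapping.lookup (nu i k x) j = (if j = i then Poly_Mapping.lookup x j div k else Poly_Mapping.lookup x j)"
  unfolding nu_def by (auto simp: lookup_minus lookup_single when_def)

lemma nu_mu: "0 < k \<Longrightarrow> nu i k (mu i k m) = m"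
  by (rule poly_mapping_eqI) (simp add: lookup_nu lookup_mu)

lemma mu_nu: "0 < k \<Longrightarrow> Dk i k x \<Longrightarrow> mu i k (nu i k x) = x"
  by (rule poly_mapping_eqI) (auto simp: lookup_nu lookup_mu Dk_def)

lemma Dk_mu: "0 < k \<Longrightarrow> Dk i k (mu i k m)"
  by (simp add: Dk_def lookup_mu)

lemma inj_mu: "0 < k \<Longrightarrow> inj (mu i k)"
  by (metis injI nu_mu)

lemma mu_add: "mu i k (a + b) = mu i k a + mu i k b"
  unfolding mu_def by (simp add: lookup_add algebra_simps single_add)

lemma mu_zero[simp]: "mu i k 0 = 0"
  unfolding mu_def by simp

lemma Dk_add: "0 < k \<Longrightarrow> Dk i k (mu i k m + x) = Dk i k x"
  by (simp add: Dk_def lookup_add lookup_mu dvd_add_right_iff)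

lemma keys_mu: "0 < k \<Longrightarrow> Poly_Mapping.keys (mu i k m) = Poly_Mapping.keys m"
  by (auto simp: in_keys_iff lookup_mu split: if_splits)

lemma keys_nu: "Poly_Mapping.keys (nu i k x) \<subseteq> Poly_Mapping.keys x"
  by (auto simp: in_keys_iff lookup_nu split: if_splits) (metis div_0 neq0_conv)

definition sig :: "nat \<Rightarrow> nat \<Rightarrow> ((nat \<Rightarrow>\<^sub>0 nat) \<Rightarrow>\<^sub>0 'a::comm_ring_1) \<Rightarrow> ((nat \<Rightarrow>\<^sub>0 nat) \<Rightarrow>\<^sub>0 'a)" where
  "sig i k p = Abs_poly_mapping (\<lambda>x. if Dk i k x then Poly_Mapping.lookup p (nu i k x) else 0)"
definition Qk :: "nat \<Rightarrow> nat \<Rightarrow> ((nat \<Rightarrow>\<^sub>0 nat) \<Rightarrow>\<^sub>0 'a::comm_ring_1) \<Rightarrow> ((nat \<Rightarrow>\<^sub>0 nat) \<Rightarrow>\<^sub>0 'a)" where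
  "Qk i k p = Abs_poly_mapping (\<lambda>x. if Dk i k x then Poly_Mapping.lookup p x else 0)"
definition rho :: "nat \<Rightarrow> nat \<Rightarrow> ((nat \<Rightarrow>\<^sub>0 nat) \<Rightarrow>\<^sub>0 'a::comm_ring_1) \<Rightarrow> ((nat \<Rightarrow>\<^sub>0 nat) \<Rightarrow>\<^sub>0 'a)" where
  "rho i k p = Abs_poly_mapping (\<lambda>m. Poly_Mapping.lookup p (mu i k m))"

lemma lookup_sig: assumes "0 < k"
  shows "Poly_Mapping.lookup (sig i k p) x = (if Dk i k x then Poly_Mapping.lookup p (nu i k x) else 0)"
proof -
  have "{x. (if Dk i k x then Poly_Mapping.lookup p (nu i k x) else 0) \<noteq> 0} \<subseteq> mu i k ` Poly_Mapping.keys p"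
  proof
    fix x assume "x \<in> {x. (if Dk i k x then Poly_Mapping.lookup p (nu i k x) else 0) \<noteq> 0}"
    then have "Dk i k x" "nu i k x \<in> Poly_Mapping.keys p" by (auto simp: in_keys_iff split: if_splits)
    then show "x \<in> mu i k ` Poly_Mapping.keys p" using assms mu_nu[of k i x] by force
  qed
  then have "finite {x. (if Dk i k x then Poly_Mapping.lookup p (nu i k x) else 0) \<noteq> 0}"
    by (rule finite_subset) simp
  then show ?thesis unfolding sig_def by simp
qed

lemma lookup_Qk: "Poly_Mapping.lookup (Qk i k p) x = (if Dk i k x then Poly_Mapping.lookup p x else 0)"
proof -
  have "{x. (if Dk i k x then Poly_Mapping.lookup p x else 0) \<noteq> 0} \<subseteq> Poly_Mapping.keys p"
    by (auto simp: in_keys_iff)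
  then have "finite {x. (if Dk i k x then Poly_Mapping.lookup p x else 0) \<noteq> 0}"
    by (rule finite_subset) simp
  then show ?thesis unfolding Qk_def by simp
qed

lemma lookup_rho: assumes "0 < k"
  shows "Poly_Mapping.lookup (rho i k p) m = Poly_Mapping.lookup p (mu i k m)"
proof -
  have "{m. Poly_Mapping.lookup p (mu i k m) \<noteq> 0} \<subseteq> nu i k ` Poly_Mapping.keys p"
  proof
    fix m assume "m \<in> {m. Poly_Mapping.lookup p (mu i k m) \<noteq> 0}"
    then have "mu i k m \<in> Poly_Mapping.keys p" by (auto simp: in_keys_iff)
    then show "m \<in> nu i k ` Poly_Mapping.keys p" using assms nu_mu[of k i m] by force
  qed
  then have "finite {m. Poly_Mapping.lookup p (mu i k m) \<noteq> 0}"
    by (rule finite_subset) simp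
  then show ?thesis unfolding rho_def by simp
qed

lemma sig_mu: "0 < k \<Longrightarrow> Poly_Mapping.lookup (sig i k p) (mu i k m) = Poly_Mapping.lookup p m"
  by (simp add: lookup_sig Dk_mu nu_mu)

lemma sig_add: "0 < k \<Longrightarrow> sig i k (p + q) = sig i k p + sig i k q"
  by (rule poly_mapping_eqI) (simp add: lookup_sig lookup_add)
lemma sig_minus: "0 < k \<Longrightarrow> sig i k (p - q) = sig i k p - sig i k q"
  by (rule poly_mapping_eqI) (simp add: lookup_sig lookup_minus)
lemma sig_zero[simp]: "0 < k \<Longrightarrow> sig i k 0 = 0"
  by (rule poly_mapping_eqI) (simp add: lookup_sig)
lemma sig_single: assumes "0 < k"
  shows "sig i k (Poly_Mapping.single m c) = Poly_Mapping.single (mu i k m) c"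
proof (rule poly_mapping_eqI)
  fix x show "Poly_Mapping.lookup (sig i k (Poly_Mapping.single m c)) x = Poly_Mapping.lookup (Poly_Mapping.single (mu i k m) c) x"
  proof (cases "Dk i k x")
    case True then have "(m = nu i k x) = (mu i k m = x)" using mu_nu nu_mu assms by metis
    then show ?thesis using True by (simp add: lookup_sig lookup_single when_def assms)
  next
    case False then have "mu i k m \<noteq> x" using Dk_mu assms by metis
    then show ?thesis using False by (simp add: lookup_sig lookup_single when_def assms)
  qed
qed

lemma sig_inj: "0 < k \<Longrightarrow> sig i k p = sig i k q \<Longrightarrow> p = q"
  by (metis poly_mapping_eqI sig_mu)

lemma Qk_add: "Qk i k (p + q) = Qk i k p + Qk i k q"
  by (rule poly_mapping_eqI) (simp add: lookup_Qk lookup_add)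
lemma Qk_zero[simp]: "Qk i k 0 = 0"
  by (rule poly_mapping_eqI) (simp add: lookup_Qk)
lemma Qk_sig: "0 < k \<Longrightarrow> Qk i k (sig i k p) = sig i k p"
  by (rule poly_mapping_eqI) (simp add: lookup_Qk lookup_sig)
lemma Qk_rho: "0 < k \<Longrightarrow> Qk i k t = sig i k (rho i k t)"
  by (rule poly_mapping_eqI) (simp add: lookup_Qk lookup_sig lookup_rho mu_nu)

lemma update_eq_add: "a \<notin> Poly_Mapping.keys f \<Longrightarrow> Poly_Mapping.update a b f = f + Poly_Mapping.single a b"
  by (rule poly_mapping_eqI) (auto simp: lookup_update lookup_add lookup_single in_keys_iff)

lemma pm_induct[case_names zero add]:
  assumes "P 0" "\<And>f a b. P f \<Longrightarrow> P (f + Poly_Mapping.single a b)"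
  shows "P f"
  by (induct f rule: update_induct) (auto simp: update_eq_add assms)

lemma sig_mult_single: assumes "0 < k"
  shows "sig i k (Poly_Mapping.single m c * q) = Poly_Mapping.single (mu i k m) c * sig i k q"
proof (induct q rule: pm_induct)
  case zero then show ?case using assms by simp
next
  case (add f a b)
  then show ?case using assms
    by (simp add: distrib_left sig_add mult_single sig_single mu_add)
qed

lemma sig_mult: assumes "0 < k"
  shows "sig i k (p * q) = sig i k p * sig i k q"
proof (induct p rule: pm_induct)
  case zero then show ?case using assms by simp
next
  case (add f a b)
  then show ?case using assms
    by (simp add: distrib_right sig_add sig_mult_single sig_single)
qed

lemma sig_one: "0 < k \<Longrightarrow> sig i k 1 = 1"
  by (metis mu_zero sig_single single_one)

lemma Qk_single: "Qk i k (Poly_Mapping.single a b) = (if Dk i k a then Poly_Mapping.single a b else 0)"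
  by (rule poly_mapping_eqI) (auto simp: lookup_Qk lookup_single when_def)

lemma Qk_mult_single: assumes "0 < k"
  shows "Qk i k (Poly_Mapping.single (mu i k m) c * q) = Poly_Mapping.single (mu i k m) c * Qk i k q"
proof (induct q rule: pm_induct)
  case zero then show ?case using assms by simp
next
  case (add f a b)
  have "Qk i k (Poly_Mapping.single (mu i k m + a) (c * b)) = Poly_Mapping.single (mu i k m) c * Qk i k (Poly_Mapping.single a b)"
    using assms by (simp add: Qk_single mult_single Dk_add)
  then show ?case using add
    by (simp add: distrib_left Qk_add mult_single)
qed

lemma Qk_mult: assumes "0 < k"
  shows "Qk i k (sig i k p * q) = sig i k p * Qk i k q"
proof (induct p rule: pm_induct)
  case zero then show ?case using assms by simp
next
  case (add f a b)
  then show ?case using assms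
    by (simp add: distrib_right sig_add Qk_add Qk_mult_single sig_single)
qed



lemma lcm_facts:
  fixes a a' L :: nat
  assumes "a > 0" "L > 0" "a dvd a'" "gcd a' L dvd a" "a' > 0"
  shows "lcm a' L = (a' div a) * lcm a L" "lcm a' L div a' = lcm a L div a"
    "coprime (a' div a) (lcm a L div a)"
proof -
  define g where "g = gcd a' L"
  define k where "k = a' div a"
  have a': "a' = k * a" using assms(3) by (simp add: k_def)
  have gpos: "g > 0" using assms by (simp add: g_def)
  have g1: "g dvd gcd a L" using assms(4) unfolding g_def by simp
  have g2: "gcd a L dvd g" unfolding g_def using assms(3) by (simp add: dvd_trans[OF gcd_dvd1])
  have ga: "gcd a L = g" using g1 g2 by (rule dvd_antisym[symmetric])
  obtain x y where x: "a' = g * x" and y: "L = g * y" and cxy: "coprime x y"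
    using gcd_coprime_exists[of a' L] gpos unfolding g_def by (metis mult.commute neq0_conv)
  obtain z where z: "a = g * z" using ga by (metis gcd_dvd1 dvdE)
  have "g * x = g * (k * z)" using x z a' by (metis mult.left_commute)
  then have "x = k * z" using gpos by simp
  have "g * lcm a L = gcd a L * lcm a L" using ga by simp
  also have "\<dots> = a * L" by (rule prod_gcd_lcm_nat[symmetric])
  also have "\<dots> = g * (a * y)" using y by simp
  finally have "g * lcm a L = g * (a * y)" .
  then have l1: "lcm a L = a * y" using gpos by simp
  have "g * lcm a' L = gcd a' L * lcm a' L" using g_def by simp
  also have "\<dots> = a' * L" by (rule prod_gcd_lcm_nat[symmetric])
  also have "\<dots> = g * (a' * y)" using y by simp
  finally have "g * lcm a' L = g * (a' * y)" .
  then have l2: "lcm a' L = a' * y" using gpos by simp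
  show "lcm a' L = (a' div a) * lcm a L" unfolding k_def[symmetric] l1 l2 by (subst a') simp
  show "lcm a' L div a' = lcm a L div a" unfolding l1 l2 using assms by simp
  have "coprime k y" using cxy \<open>x = k * z\<close> by simp
  then show "coprime (a' div a) (lcm a L div a)" unfolding k_def[symmetric] l1 using assms by simp
qed



lemma set_remove_nth: "i < length S \<Longrightarrow> set S = insert (S!i) (set (remove_nth i S))"
  unfolding remove_nth_def
  by (subst id_take_nth_drop[of i S]) auto

lemma remove_nth_nth:
  assumes "i < length S" "j < length S" "j \<noteq> i"
  shows "S ! j = remove_nth i S ! (if j < i then j else j - 1)"
  using assms unfolding remove_nth_def by (auto simp: nth_append min_def)

lemma nth_eq_remove:
  assumes "remove_nth i S = remove_nth i S'" "length S = length S'" "i < length S" "j < length S" "j \<noteq> i"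
  shows "S ! j = S' ! j"
  using remove_nth_nth[of i S j] remove_nth_nth[of i S' j] assms by simp

lemma weights:
  assumes len: "length S = n" "length S' = n" and pos: "\<forall>a \<in> set S. a > 0" "\<forall>a \<in> set S'. a > 0"
    and i: "i < n" and le: "le_idx S i S'"
    and kdef: "k = S' ! i div S ! i"
  shows "0 < k" "S' ! i = k * S ! i"
    "\<And>j. j < n \<Longrightarrow> j \<noteq> i \<Longrightarrow> S' ! j = S ! j"
    "\<And>m. wdeg S' (mu i k m) = k * wdeg S m"
    "\<And>m. k dvd wdeg S' m \<Longrightarrow> k dvd Poly_Mapping.lookup m i"
proof -
  define a where "a = S ! i"
  define a' where "a' = S' ! i"
  define L where "L = Lcm (set (remove_nth i S))"
  have rem: "remove_nth i S = remove_nth i S'" and gd: "gcd a' L dvd a" and ad: "a dvd a'"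
    using le unfolding le_idx_def g_idx_def a_def a'_def L_def by auto
  have apos: "a > 0" using pos i len a_def by auto
  have a'pos: "a' > 0" using pos i len a'_def by auto
  have "0 \<notin> set (remove_nth i S)" using pos(1) set_remove_nth[of i S] i len by auto
  then have Lpos: "L > 0" unfolding L_def by (metis Lcm_0_iff finite_set neq0_conv)
  have LS: "Lcm (set S) = lcm a L" using set_remove_nth[of i S] i len unfolding a_def L_def by simp
  have LS': "Lcm (set S') = lcm a' L" using set_remove_nth[of i S'] i len rem unfolding a'_def L_def by simp
  have kk: "k = a' div a" using kdef a_def a'_def by simp
  note lf = lcm_facts[OF apos Lpos ad gd a'pos, folded kk]
  show "0 < k" using kk ad apos a'pos by (metis dvd_div_eq_0_iff neq0_conv)
  show ak: "S' ! i = k * S ! i" using kk ad a_def a'_def by simp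
  show eqj: "\<And>j. j < n \<Longrightarrow> j \<noteq> i \<Longrightarrow> S' ! j = S ! j"
    using nth_eq_remove[OF rem] len i by simp
  have wi: "Lcm (set S') div S' ! i = Lcm (set S) div S ! i" using LS LS' lf(2) a_def a'_def by simp
  have wj: "Lcm (set S') div S' ! j = k * (Lcm (set S) div S ! j)" if "j < n" "j \<noteq> i" for j
  proof -
    have "S ! j \<in> set S" using that len by simp
    then have "S ! j dvd Lcm (set S)" by (rule dvd_Lcm)
    then show ?thesis using eqj[OF that] LS LS' lf(1) by (simp add: div_mult_swap)
  qed
  show "wdeg S' (mu i k m) = k * wdeg S m" for m
  proof -
    have "wdeg S' (mu i k m) = (\<Sum>j<n. k * (Poly_Mapping.lookup m j * (Lcm (set S) div S ! j)))"
      unfolding wdeg_def len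
    proof (rule sum.cong[OF refl])
      fix j assume "j \<in> {..<n}"
      then show "Poly_Mapping.lookup (mu i k m) j * (Lcm (set S') div S' ! j) = k * (Poly_Mapping.lookup m j * (Lcm (set S) div S ! j))"
        using wi wj[of j] \<open>0 < k\<close> by (auto simp: lookup_mu)
    qed
    then show ?thesis unfolding wdeg_def len by (simp add: sum_distrib_left)
  qed
  show "k dvd Poly_Mapping.lookup m i" if "k dvd wdeg S' m" for m
  proof -
    have "wdeg S' m = Poly_Mapping.lookup m i * (Lcm (set S') div S' ! i) +
       (\<Sum>j\<in>{..<n} - {i}. Poly_Mapping.lookup m j * (Lcm (set S') div S' ! j))"
      unfolding wdeg_def len using i by (simp add: sum.remove)
    moreover have "k dvd (\<Sum>j\<in>{..<n} - {i}. Poly_Mapping.lookup m j * (Lcm (set S') div S' ! j))"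
      by (rule dvd_sum) (simp add: wj)
    ultimately have "k dvd Poly_Mapping.lookup m i * (Lcm (set S) div S ! i)"
      using that wi by (simp add: dvd_add_left_iff)
    moreover have "coprime k (Lcm (set S) div S ! i)" using lf(3) LS a_def by simp
    ultimately show ?thesis by (metis coprime_dvd_mult_left_iff)
  qed
qed




definition PC :: "nat \<Rightarrow> 'a::field mpoly set" where "PC n = {p. \<forall>m \<in> Poly_Mapping.keys p. Poly_Mapping.keys m \<subseteq> {..<n}}"

lemma pring_carrier: "carrier (pring n) = PC n"
  by (simp add: pring_def PC_def)
lemma pring_simps[simp]: "a \<otimes>\<^bsub>pring n\<^esub> b = a * b" "a \<oplus>\<^bsub>pring n\<^esub> b = a + b"
  "\<one>\<^bsub>pring n\<^esub> = 1" "\<zero>\<^bsub>pring n\<^esub> = 0"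
  by (simp_all add: pring_def)

lemma PC_add: "p \<in> PC n \<Longrightarrow> q \<in> PC n \<Longrightarrow> p + q \<in> PC n"
  unfolding PC_def mem_Collect_eq using keys_add[of p q] by (meson Un_iff subsetD)
lemma PC_uminus: "p \<in> PC n \<Longrightarrow> - p \<in> PC n"
  by (simp add: PC_def)
lemma PC_diff: "p \<in> PC n \<Longrightarrow> q \<in> PC n \<Longrightarrow> p - q \<in> PC n"
  using PC_add[OF _ PC_uminus, of p n q] by (simp only: diff_conv_add_uminus)
lemma PC_mult: assumes "p \<in> PC n" "q \<in> PC n" shows "p * q \<in> PC n"
unfolding PC_def mem_Collect_eq proof (intro ballI)
  fix m assume "m \<in> Poly_Mapping.keys (p * q)"
  then obtain a b where "a \<in> Poly_Mapping.keys p" "b \<in> Poly_Mapping.keys q" "m = a + b"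
    using keys_mult by blast
  then have "Poly_Mapping.keys a \<subseteq> {..<n}" "Poly_Mapping.keys b \<subseteq> {..<n}" using assms unfolding PC_def by auto
  then show "Poly_Mapping.keys m \<subseteq> {..<n}" using keys_add[of a b] \<open>m = a + b\<close> by auto
qed
lemma PC_one: "(1 :: 'a::field mpoly) \<in> PC n"
  by (simp add: PC_def)
lemma PC_zero: "(0 :: 'a::field mpoly) \<in> PC n"
  by (simp add: PC_def)

lemma cring_pring: "cring (pring n)"
proof (rule cringI)
  show "abelian_group (pring n)"
    apply (rule abelian_groupI)
    apply (simp_all add: pring_carrier PC_add PC_zero add.assoc add.commute)
    subgoal for x by (rule bexI[of _ "-x"]) (simp_all add: PC_uminus)
    done
  show "comm_monoid (pring n)"
    by (rule comm_monoidI) (simp_all add: pring_carrier PC_mult PC_one mult.assoc mult.commute)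
qed (simp add: distrib_right)

lemma pring_minus: assumes "a \<in> carrier (pring n)" "b \<in> carrier (pring n)"
  shows "a \<ominus>\<^bsub>pring n\<^esub> b = a - b"
proof -
  interpret cring "pring n" by (rule cring_pring)
  have "\<ominus>\<^bsub>pring n\<^esub> b = - b"
    using assms by (intro minus_equality) (auto simp: pring_carrier PC_uminus)
  then show ?thesis by (simp add: a_minus_def)
qed

lemma keys_sig: assumes k: "0 < k" shows "Poly_Mapping.keys (sig i k p) = mu i k ` Poly_Mapping.keys p"
proof (intro equalityI subsetI)
  fix x assume x: "x \<in> Poly_Mapping.keys (sig i k p)"
  have "Dk i k x" using k x by (simp add: in_keys_iff lookup_sig split: if_splits)
  have "nu i k x \<in> Poly_Mapping.keys p" using k x by (simp add: in_keys_iff lookup_sig split: if_splits)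
  have "x = mu i k (nu i k x)" using mu_nu[OF k \<open>Dk i k x\<close>] by simp
  then show "x \<in> mu i k ` Poly_Mapping.keys p" using \<open>nu i k x \<in> Poly_Mapping.keys p\<close> by (rule image_eqI)
next
  fix x assume "x \<in> mu i k ` Poly_Mapping.keys p"
  then obtain m where "x = mu i k m" "m \<in> Poly_Mapping.keys p" by (rule imageE)
  then show "x \<in> Poly_Mapping.keys (sig i k p)" using k by (simp add: in_keys_iff sig_mu)
qed

lemma keys_rho: "0 < k \<Longrightarrow> m \<in> Poly_Mapping.keys (rho i k t) \<longleftrightarrow> mu i k m \<in> Poly_Mapping.keys t"
  by (simp add: in_keys_iff lookup_rho)

lemma PC_sig: "0 < k \<Longrightarrow> p \<in> PC n \<Longrightarrow> sig i k p \<in> PC n"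
  by (auto simp: keys_sig keys_mu PC_def)
lemma PC_rho: "0 < k \<Longrightarrow> p \<in> PC n \<Longrightarrow> rho i k p \<in> PC n"
  unfolding PC_def mem_Collect_eq
proof (intro ballI)
  fix m assume k: "0 < k" and p: "\<forall>m\<in>Poly_Mapping.keys p. Poly_Mapping.keys m \<subseteq> {..<n}"
    and m: "m \<in> Poly_Mapping.keys (rho i k p)"
  have "mu i k m \<in> Poly_Mapping.keys p" using keys_rho[OF k, THEN iffD1, OF m] .
  then have "Poly_Mapping.keys (mu i k m) \<subseteq> {..<n}" using p by blast
  then show "Poly_Mapping.keys m \<subseteq> {..<n}" by (simp only: keys_mu[OF k])
qed

lemma sig_sum: "0 < k \<Longrightarrow> sig i k (sum f A) = (\<Sum>x\<in>A. sig i k (f x))"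
  by (induct A rule: infinite_finite_induct) (auto simp: sig_add)

lemma PC_Xpow: "j < n \<Longrightarrow> (Xpow j e :: 'a::field mpoly) \<in> PC n"
  by (auto simp: Xpow_def PC_def)

lemma PC_sum: "(\<And>x. x \<in> A \<Longrightarrow> f x \<in> PC n) \<Longrightarrow> sum f A \<in> PC n"
  by (induct A rule: infinite_finite_induct) (auto intro: PC_add PC_zero)

lemma PC_fermat: "(fermat_poly T :: 'a::field mpoly) \<in> PC (length T)"
  unfolding fermat_poly_def by (intro PC_sum PC_Xpow) auto

lemma fermat_ideal_eq: "(fermat_ideal T :: 'a::field mpoly set) = {x * fermat_poly T | x. x \<in> PC (length T)}"
proof -
  interpret cring "pring (length T) :: 'a mpoly ring" by (rule cring_pring)
  have "(fermat_poly T :: 'a mpoly) \<in> carrier (pring (length T))" by (simp add: pring_carrier PC_fermat)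
  then have "Idl\<^bsub>pring (length T)\<^esub> {fermat_poly T :: 'a mpoly} = PIdl\<^bsub>pring (length T)\<^esub> (fermat_poly T)"
    by (rule cgenideal_eq_genideal[symmetric])
  then show ?thesis unfolding fermat_ideal_def cgenideal_def
    by (simp add: pring_carrier)
qed

lemma ideal_fermat: "ideal (fermat_ideal T :: 'a::field mpoly set) (pring (length T))"
proof -
  interpret cring "pring (length T) :: 'a mpoly ring" by (rule cring_pring)
  show ?thesis unfolding fermat_ideal_def
    by (rule genideal_ideal) (simp add: pring_carrier PC_fermat)
qed

lemma coset_eq_iff: assumes "a \<in> PC (length T)" "b \<in> PC (length T)"
  shows "(fermat_ideal T +>\<^bsub>pring (length T)\<^esub> a = fermat_ideal T +>\<^bsub>pring (length T)\<^esub> b) \<longleftrightarrow>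
     (\<exists>x \<in> PC (length T). a - b = x * (fermat_poly T :: 'a::field mpoly))"
proof -
  interpret cring "pring (length T) :: 'a mpoly ring" by (rule cring_pring)
  show ?thesis
    using quotient_eq_iff_same_a_r_cos[OF ideal_fermat, of a b] assms
    by (auto simp: pring_carrier pring_minus fermat_ideal_eq)
qed

lemma B_carrier: "carrier (B_ring T :: 'a::field mpoly set ring) = {fermat_ideal T +>\<^bsub>pring (length T)\<^esub> p | p. p \<in> PC (length T)}"
  unfolding B_ring_def FactRing_def A_RCOSETS_def' by (auto simp: pring_carrier)



lemma mu_single: "0 < k \<Longrightarrow> mu i k (Poly_Mapping.single j e) = Poly_Mapping.single j (if j = i then k * e else e)"
  by (rule poly_mapping_eqI) (auto simp: lookup_mu lookup_single when_def)

lemma Qk_id: "(\<And>x. x \<in> Poly_Mapping.keys p \<Longrightarrow> Dk i k x) \<Longrightarrow> Qk i k p = p"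
  by (rule poly_mapping_eqI) (auto simp: lookup_Qk in_keys_iff)

definition phi :: "nat list \<Rightarrow> nat list \<Rightarrow> nat \<Rightarrow> nat \<Rightarrow> 'a::field mpoly set \<Rightarrow> 'a mpoly set" where
  "phi S S' i k A = fermat_ideal S' +>\<^bsub>pring (length S')\<^esub>
     sig i k (SOME p. p \<in> PC (length S) \<and> A = fermat_ideal S +>\<^bsub>pring (length S)\<^esub> p)"

locale setting =
  fixes S S' :: "nat list" and i k :: nat
  assumes len: "length S' = length S" and ilt: "i < length S" and kpos: "0 < k"
    and ak: "S' ! i = k * S ! i" and eqj: "\<And>j. j < length S \<Longrightarrow> j \<noteq> i \<Longrightarrow> S' ! j = S ! j"
    and wmu: "\<And>m. wdeg S' (mu i k m) = k * wdeg S m"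
    and wdvd: "\<And>m. k dvd wdeg S' m \<Longrightarrow> k dvd Poly_Mapping.lookup m i"
begin

lemma Fsig: "sig i k (fermat_poly S :: 'a::field mpoly) = fermat_poly S'"
  unfolding fermat_poly_def len sig_sum[OF kpos]
proof (rule sum.cong[OF refl])
  fix j assume "j \<in> {..<length S}"
  then show "sig i k (Xpow j (S ! j) :: 'a mpoly) = Xpow j (S' ! j)"
    using kpos ak eqj[of j] by (auto simp: Xpow_def sig_single mu_single)
qed

lemma key:
  assumes "p \<in> PC (length S)" "q \<in> PC (length S)"
  shows "(fermat_ideal S +>\<^bsub>pring (length S)\<^esub> p = fermat_ideal S +>\<^bsub>pring (length S)\<^esub> q) \<longleftrightarrow>
    (fermat_ideal S' +>\<^bsub>pring (length S')\<^esub> sig i k p = fermat_ideal S' +>\<^bsub>pring (length S')\<^esub> (sig i k q :: 'a::field mpoly))"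
proof -
  have sp: "sig i k p \<in> PC (length S')" "sig i k q \<in> PC (length S')"
    using assms PC_sig[OF kpos] len by simp_all
  have "(\<exists>x \<in> PC (length S). p - q = x * fermat_poly S) \<longleftrightarrow>
        (\<exists>y \<in> PC (length S'). sig i k p - sig i k q = y * fermat_poly S')"
  proof
    assume "\<exists>x \<in> PC (length S). p - q = x * fermat_poly S"
    then obtain x where x: "x \<in> PC (length S)" "p - q = x * fermat_poly S" by blast
    then have "sig i k p - sig i k q = sig i k x * fermat_poly S'"
      by (simp add: Fsig sig_minus[OF kpos, symmetric] sig_mult[OF kpos])
    moreover have "sig i k x \<in> PC (length S')" using x PC_sig[OF kpos] len by simp
    ultimately show "\<exists>y \<in> PC (length S'). sig i k p - sig i k q = y * fermat_poly S'" by blast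
  next
    assume "\<exists>y \<in> PC (length S'). sig i k p - sig i k q = y * fermat_poly S'"
    then obtain y where y: "y \<in> PC (length S')" "sig i k p - sig i k q = y * fermat_poly S'" by blast
    have "sig i k (p - q) = Qk i k (sig i k (p - q))" using kpos by (simp add: Qk_sig)
    also have "\<dots> = Qk i k (sig i k (fermat_poly S) * y)"
      using y kpos by (simp add: sig_minus Fsig mult.commute)
    also have "\<dots> = sig i k (fermat_poly S) * sig i k (rho i k y)"
      by (subst Qk_mult[OF kpos]) (simp add: Qk_rho[OF kpos, of i y])
    also have "\<dots> = sig i k (rho i k y * fermat_poly S)"
      using kpos by (simp add: sig_mult mult.commute)
    finally have "p - q = rho i k y * fermat_poly S" using kpos by (rule_tac sig_inj) simp_all
    moreover have "rho i k y \<in> PC (length S)" using y PC_rho[OF kpos] len by simp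
    ultimately show "\<exists>x \<in> PC (length S). p - q = x * fermat_poly S" by blast
  qed
  then show ?thesis
    using coset_eq_iff[of p S q] coset_eq_iff[of "sig i k p" S' "sig i k q"] assms sp by simp
qed

lemma phi_eq:
  assumes "p \<in> PC (length S)"
  shows "phi S S' i k (fermat_ideal S +>\<^bsub>pring (length S)\<^esub> p) = fermat_ideal S' +>\<^bsub>pring (length S')\<^esub> (sig i k p :: 'a::field mpoly)"
proof -
  define A where "A = fermat_ideal S +>\<^bsub>pring (length S)\<^esub> p"
  let ?P = "\<lambda>q. q \<in> PC (length S) \<and> A = fermat_ideal S +>\<^bsub>pring (length S)\<^esub> q"
  have "?P p" using assms A_def by simp
  then have "?P (SOME q. ?P q)" by (rule someI)
  then show ?thesis unfolding phi_def A_def[symmetric] using key[of "SOME q. ?P q" p] assms A_def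
    by auto
qed

end

lemma hom_B: "((+>\<^bsub>pring (length T)\<^esub>) (fermat_ideal T)) \<in> ring_hom (pring (length T)) (B_ring T :: 'b::field mpoly set ring)"
  unfolding B_ring_def by (rule ideal.rcos_ring_hom[OF ideal_fermat])

lemma B_mult: "p \<in> PC (length T) \<Longrightarrow> q \<in> PC (length T) \<Longrightarrow>
  (fermat_ideal T +>\<^bsub>pring (length T)\<^esub> p) \<otimes>\<^bsub>B_ring T\<^esub> (fermat_ideal T +>\<^bsub>pring (length T)\<^esub> q) =
   fermat_ideal T +>\<^bsub>pring (length T)\<^esub> (p * (q :: 'b::field mpoly))"
  using ring_hom_mult[OF hom_B, of p T q] by (simp add: pring_carrier)

lemma B_add: "p \<in> PC (length T) \<Longrightarrow> q \<in> PC (length T) \<Longrightarrow>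
  (fermat_ideal T +>\<^bsub>pring (length T)\<^esub> p) \<oplus>\<^bsub>B_ring T\<^esub> (fermat_ideal T +>\<^bsub>pring (length T)\<^esub> q) =
   fermat_ideal T +>\<^bsub>pring (length T)\<^esub> (p + (q :: 'b::field mpoly))"
  using ring_hom_add[OF hom_B, of p T q] by (simp add: pring_carrier)

lemma B_one: "\<one>\<^bsub>B_ring T\<^esub> = fermat_ideal T +>\<^bsub>pring (length T)\<^esub> (1 :: 'b::field mpoly)"
  by (simp add: B_ring_def FactRing_def)

lemma veronese_simps: "a \<otimes>\<^bsub>veronese T k\<^esub> b = a \<otimes>\<^bsub>B_ring T\<^esub> b"
  "a \<oplus>\<^bsub>veronese T k\<^esub> b = a \<oplus>\<^bsub>B_ring T\<^esub> b" "\<one>\<^bsub>veronese T k\<^esub> = \<one>\<^bsub>B_ring T\<^esub>"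
  "carrier (veronese T k) = {fermat_ideal T +>\<^bsub>pring (length T)\<^esub> p | p.
        p \<in> PC (length T) \<and> (\<forall>m \<in> Poly_Mapping.keys p. k dvd wdeg T m)}"
  by (simp_all add: veronese_def pring_carrier)

context setting
begin

lemma preimage:
  assumes "p' \<in> PC (length S')" "\<And>m. m \<in> Poly_Mapping.keys p' \<Longrightarrow> k dvd wdeg S' m"
  shows "p' = sig i k (rho i k p') \<and> rho i k p' \<in> PC (length S)"
proof
  have "Qk i k p' = p'" by (rule Qk_id) (simp add: Dk_def wdvd assms(2))
  then show "p' = sig i k (rho i k p')" using Qk_rho[OF kpos, of i p'] by simp
  show "rho i k p' \<in> PC (length S)" using PC_rho[OF kpos assms(1)] len by simp
qed

lemma sig_dvd: assumes "m \<in> Poly_Mapping.keys (sig i k p)" shows "k dvd wdeg S' m"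
proof -
  obtain m0 where "m = mu i k m0" using assms keys_sig[OF kpos, of i p] by blast
  then show ?thesis using wmu by simp
qed

theorem iso: "graded_iso_veronese TYPE('a::field) S S' k"
  unfolding graded_iso_veronese_def
proof (intro exI conjI allI)
  let ?I = "fermat_ideal S :: 'a mpoly set"
  let ?I' = "fermat_ideal S' :: 'a mpoly set"
  let ?R = "pring (length S) :: 'a mpoly ring"
  let ?R' = "pring (length S') :: 'a mpoly ring"
  let ?phi = "phi S S' i k :: 'a mpoly set \<Rightarrow> 'a mpoly set"
  have PCs: "p \<in> PC (length S) \<Longrightarrow> sig i k p \<in> PC (length S')" for p :: "'a mpoly"
    using PC_sig[OF kpos] len by simp
  show "?phi \<in> ring_iso (B_ring S) (veronese S' k)"
  proof (rule ring_iso_memI)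
    fix x assume "x \<in> carrier (B_ring S :: 'a mpoly set ring)"
    then obtain p where p: "p \<in> PC (length S)" "x = ?I +>\<^bsub>?R\<^esub> p" by (auto simp: B_carrier)
    then show "?phi x \<in> carrier (veronese S' k)"
      using PCs[OF p(1)] sig_dvd by (auto simp: phi_eq veronese_simps)
  next
    fix x y assume "x \<in> carrier (B_ring S :: 'a mpoly set ring)" "y \<in> carrier (B_ring S :: 'a mpoly set ring)"
    then obtain p q where p: "p \<in> PC (length S)" "x = ?I +>\<^bsub>?R\<^esub> p"
      and q: "q \<in> PC (length S)" "y = ?I +>\<^bsub>?R\<^esub> q" by (auto simp: B_carrier)
    show "?phi (x \<otimes>\<^bsub>B_ring S\<^esub> y) = ?phi x \<otimes>\<^bsub>veronese S' k\<^esub> ?phi y"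
      using p q PCs[OF p(1)] PCs[OF q(1)]
      by (simp add: B_mult phi_eq PC_mult veronese_simps sig_mult[OF kpos])
    show "?phi (x \<oplus>\<^bsub>B_ring S\<^esub> y) = ?phi x \<oplus>\<^bsub>veronese S' k\<^esub> ?phi y"
      using p q PCs[OF p(1)] PCs[OF q(1)]
      by (simp add: B_add phi_eq PC_add veronese_simps sig_add[OF kpos])
  next
    show "?phi \<one>\<^bsub>B_ring S\<^esub> = \<one>\<^bsub>veronese S' k\<^esub>"
      by (simp add: B_one phi_eq PC_one veronese_simps sig_one[OF kpos])
  next
    show "bij_betw ?phi (carrier (B_ring S)) (carrier (veronese S' k))"
    proof (rule bij_betw_imageI)
      show "inj_on ?phi (carrier (B_ring S))"
      proof (rule inj_onI)
        fix x y assume "x \<in> carrier (B_ring S :: 'a mpoly set ring)" "y \<in> carrier (B_ring S :: 'a mpoly set ring)"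
          and e: "?phi x = ?phi y"
        then obtain p q where p: "p \<in> PC (length S)" "x = ?I +>\<^bsub>?R\<^esub> p"
          and q: "q \<in> PC (length S)" "y = ?I +>\<^bsub>?R\<^esub> q" by (auto simp: B_carrier)
        then show "x = y" using e key[OF p(1) q(1)] by (simp add: phi_eq)
      qed
      show "?phi ` carrier (B_ring S) = carrier (veronese S' k)"
      proof (intro equalityI subsetI)
        fix y assume "y \<in> ?phi ` carrier (B_ring S)"
        then obtain p where p: "p \<in> PC (length S)" "y = ?phi (?I +>\<^bsub>?R\<^esub> p)" by (auto simp: B_carrier)
        then show "y \<in> carrier (veronese S' k)"
          using PCs[OF p(1)] sig_dvd by (auto simp: phi_eq veronese_simps)
      next
        fix y assume "y \<in> carrier (veronese S' k :: 'a mpoly set ring)"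
        then obtain p' where p': "p' \<in> PC (length S')" "\<And>m. m \<in> Poly_Mapping.keys p' \<Longrightarrow> k dvd wdeg S' m"
          "y = ?I' +>\<^bsub>?R'\<^esub> p'" by (auto simp: veronese_simps)
        note pre = preimage[OF p'(1,2)]
        have "y = ?phi (?I +>\<^bsub>?R\<^esub> rho i k p')" using pre p'(3) by (simp add: phi_eq)
        moreover have "?I +>\<^bsub>?R\<^esub> rho i k p' \<in> carrier (B_ring S)" using pre by (auto simp: B_carrier)
        ultimately show "y \<in> ?phi ` carrier (B_ring S)" by blast
      qed
    qed
  qed
next
  let ?I = "fermat_ideal S :: 'a mpoly set"
  let ?I' = "fermat_ideal S' :: 'a mpoly set"
  let ?R = "pring (length S) :: 'a mpoly ring"
  let ?R' = "pring (length S') :: 'a mpoly ring"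
  let ?phi = "phi S S' i k :: 'a mpoly set \<Rightarrow> 'a mpoly set"
  have PCs: "p \<in> PC (length S) \<Longrightarrow> sig i k p \<in> PC (length S')" for p :: "'a mpoly"
    using PC_sig[OF kpos] len by simp
  fix c :: 'a
  show "?phi (?I +>\<^bsub>?R\<^esub> const_poly c) = ?I' +>\<^bsub>?R'\<^esub> const_poly c"
    by (simp add: const_poly_def phi_eq PC_def sig_single[OF kpos])
next
  let ?I = "fermat_ideal S :: 'a mpoly set"
  let ?I' = "fermat_ideal S' :: 'a mpoly set"
  let ?R = "pring (length S) :: 'a mpoly ring"
  let ?R' = "pring (length S') :: 'a mpoly ring"
  let ?phi = "phi S S' i k :: 'a mpoly set \<Rightarrow> 'a mpoly set"
  have PCs: "p \<in> PC (length S) \<Longrightarrow> sig i k p \<in> PC (length S')" for p :: "'a mpoly"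
    using PC_sig[OF kpos] len by simp
  fix d
  show "?phi ` B_part S d = B_part S' (d * k)"
  proof (intro equalityI subsetI)
    fix y assume "y \<in> ?phi ` B_part S d"
    then obtain p where p: "p \<in> PC (length S)" "homogeneous S d p" "y = ?phi (?I +>\<^bsub>?R\<^esub> p)"
      by (auto simp: B_part_def pring_carrier)
    have "homogeneous S' (d * k) (sig i k p)"
      using p(2) unfolding homogeneous_def by (auto simp: keys_sig[OF kpos] wmu)
    then show "y \<in> B_part S' (d * k)"
      using p PCs[OF p(1)] unfolding B_part_def by (auto simp: phi_eq pring_carrier)
  next
    fix y assume "y \<in> (B_part S' (d * k) :: 'a mpoly set set)"
    then obtain p' where p': "p' \<in> PC (length S')" "homogeneous S' (d * k) p'"
          "y = ?I' +>\<^bsub>?R'\<^esub> p'" by (auto simp: B_part_def pring_carrier)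
    have dv: "\<And>m. m \<in> Poly_Mapping.keys p' \<Longrightarrow> k dvd wdeg S' m"
      using p'(2) unfolding homogeneous_def by simp
    note pre = preimage[OF p'(1) dv]
    have "homogeneous S d (rho i k p')"
      unfolding homogeneous_def
    proof
      fix m assume "m \<in> Poly_Mapping.keys (rho i k p')"
      then have "mu i k m \<in> Poly_Mapping.keys p'" using keys_rho[OF kpos] by blast
      then have "k * wdeg S m = d * k" using p'(2) wmu unfolding homogeneous_def by metis
      then show "wdeg S m = d" using kpos by simp
    qed
    then have "?I +>\<^bsub>?R\<^esub> rho i k p' \<in> B_part S d" using pre unfolding B_part_def by (auto simp: pring_carrier)
    moreover have "y = ?phi (?I +>\<^bsub>?R\<^esub> rho i k p')" using pre p'(3) by (simp add: phi_eq)
    ultimately show "y \<in> ?phi ` B_part S d" by blast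
  qed
qed

end


theorem proposition5p2:
  fixes S S' :: "nat list" and n i :: nat
  assumes "n \<ge> 3" and "length S = n" and "length S' = n"
    and "\<forall>a \<in> set S. a > 0" and "\<forall>a \<in> set S'. a > 0"
    and "i < n" and "le_idx S i S'"
  shows "graded_iso_veronese TYPE('a::field_char_0) S S' (S' ! i div S ! i)"
proof -
  note w = weights[OF assms(2-7) refl]
  have "setting S S' i (S' ! i div S ! i)"
    by (rule setting.intro) (use w assms(2,3,6) in auto)
  then show ?thesis by (rule setting.iso)
qed

end
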